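(* Let $\mathcal{P}$ be a topological property and let $X$ be a $T_1$-space with at least two points. Then $X$ is locally $\mathcal{P}$ if and only if every card of $X$ is locally $\mathcal{P}$. In particular, if $X$ and $Z$ are $T_1$-spaces with $\mathcal{D}(X)=\mathcal{D}(Z)$ (and at least two points), then $X$ is locally $\mathcal{P}$ if and only if $Z$ is locally $\mathcal{P}$.
   Context: A space $X$ is locally $\mathcal{P}$ if for every $x \in X$ and every open $U \ni x$ there is $A \subseteq X$ with $x \in \operatorname{int}(A) \subseteq A \subseteq U$ such that $A$ (as a subspace) has $\mathcal{P}$. For a topological space $X$ and $x \in X$, the set $X\setminus\{x\}$ carries the subspace topology. A card of $X$ is a space homeomorphic to $X \setminus \{x\}$ for some $x \in X$. The deck of $X$ is $\mathcal{D}(X)=\{[X\setminus\{x\}]_\sim : x \in X\}$, where $[Y]_\sim$ denotes the homeomorphism class of $Y$. *)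

theory Defs
  imports "HOL-Analysis.Analysis"
begin

definition topological_property :: "('a topology \<Rightarrow> bool) \<Rightarrow> bool" where
  "topological_property P \<longleftrightarrow>
     (\<forall>S T. S homeomorphic_space T \<longrightarrow> (P S \<longleftrightarrow> P T))"

definition locally_P :: "('a topology \<Rightarrow> bool) \<Rightarrow> 'a topology \<Rightarrow> bool" where
  "locally_P P X \<longleftrightarrow>
     (\<forall>x \<in> topspace X. \<forall>U. openin X U \<and> x \<in> U \<longrightarrow>
        (\<exists>A. A \<subseteq> topspace X \<and> x \<in> X interior_of A \<and> A \<subseteq> U \<and> P (subtopology X A)))"

definition card_of :: "'a topology \<Rightarrow> 'a \<Rightarrow> 'a topology" where
  "card_of X x = subtopology X (topspace X - {x})"

text \<open>Equality of decks D(X) = D(Z): the sets of homeomorphism classes of cards coincide.\<close>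
definition same_deck :: "'a topology \<Rightarrow> 'b topology \<Rightarrow> bool" where
  "same_deck X Z \<longleftrightarrow>
     (\<forall>x \<in> topspace X. \<exists>z \<in> topspace Z. card_of X x homeomorphic_space card_of Z z) \<and>
     (\<forall>z \<in> topspace Z. \<exists>x \<in> topspace X. card_of X x homeomorphic_space card_of Z z)"

end

theory Submission
  imports Defs
begin

lemma locally_PD:
  "locally_P P X \<Longrightarrow> x \<in> topspace X \<Longrightarrow> openin X U \<Longrightarrow> x \<in> U \<Longrightarrow>
   \<exists>A. A \<subseteq> topspace X \<and> x \<in> X interior_of A \<and> A \<subseteq> U \<and> P (subtopology X A)"
  unfolding locally_P_def by blast

lemma loc_open_sub:
  assumes W: "openin X W" and L: "locally_P P X"
  shows "locally_P P (subtopology X W)"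
  unfolding locally_P_def
proof (intro ballI allI impI)
  fix y U assume y: "y \<in> topspace (subtopology X W)" and U: "openin (subtopology X W) U \<and> y \<in> U"
  have UX: "openin X U" "U \<subseteq> W" using U W openin_open_subtopology by blast+
  have yX: "y \<in> topspace X" using y by simp
  obtain A where A: "A \<subseteq> topspace X" "y \<in> X interior_of A" "A \<subseteq> U" "P (subtopology X A)"
    using locally_PD[OF L yX UX(1)] U by blast
  have AW: "A \<subseteq> W" using A UX by blast
  have "(subtopology X W) interior_of A = W \<inter> X interior_of A"
    by (rule interior_of_subtopology_open[OF W])
  moreover have "y \<in> W" using U UX by blast
  ultimately have "y \<in> (subtopology X W) interior_of A" using A by blast
  moreover have "subtopology (subtopology X W) A = subtopology X A"
    using AW by (simp add: subtopology_subtopology Int_absorb1)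
  ultimately show "\<exists>A. A \<subseteq> topspace (subtopology X W) \<and> y \<in> subtopology X W interior_of A \<and> A \<subseteq> U \<and> P (subtopology (subtopology X W) A)"
    using A AW by (intro exI[of _ A]) auto
qed

lemma loc_from_open_cover:
  assumes C: "\<And>x. x \<in> topspace X \<Longrightarrow> \<exists>W. openin X W \<and> x \<in> W \<and> locally_P P (subtopology X W)"
  shows "locally_P P X"
  unfolding locally_P_def
proof (intro ballI allI impI)
  fix x U assume x: "x \<in> topspace X" and U: "openin X U \<and> x \<in> U"
  obtain W where W: "openin X W" "x \<in> W" "locally_P P (subtopology X W)" using C x by blast
  have "openin (subtopology X W) (U \<inter> W)" using U W
    by (simp add: openin_open_subtopology openin_Int)
  moreover have "x \<in> topspace (subtopology X W)" using x W by simp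
  ultimately obtain A where A: "A \<subseteq> topspace (subtopology X W)" "x \<in> (subtopology X W) interior_of A"
     "A \<subseteq> U \<inter> W" "P (subtopology (subtopology X W) A)"
    using locally_PD[OF W(3)] U W by blast
  have "(subtopology X W) interior_of A = W \<inter> X interior_of A"
    by (rule interior_of_subtopology_open[OF W(1)])
  then have "x \<in> X interior_of A" using A by blast
  moreover have "subtopology (subtopology X W) A = subtopology X A"
    using A by (simp add: subtopology_subtopology Int_absorb1)
  ultimately show "\<exists>A. A \<subseteq> topspace X \<and> x \<in> X interior_of A \<and> A \<subseteq> U \<and> P (subtopology X A)"
    using A by (intro exI[of _ A]) auto
qed

lemma loc_cards:
  assumes "t1_space X" and "\<exists>a b. a \<in> topspace X \<and> b \<in> topspace X \<and> a \<noteq> b"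
  shows "locally_P P X \<longleftrightarrow> (\<forall>x \<in> topspace X. locally_P P (card_of X x))"
proof
  assume L: "locally_P P X"
  show "\<forall>x \<in> topspace X. locally_P P (card_of X x)"
    unfolding card_of_def
  proof
    fix x assume "x \<in> topspace X"
    have "openin X (topspace X - {x})" by (rule t1_space_openin_delete_alt[THEN iffD1, OF assms(1), rule_format, OF openin_topspace])
    then show "locally_P P (subtopology X (topspace X - {x}))" using L loc_open_sub by blast
  qed
next
  assume C: "\<forall>x \<in> topspace X. locally_P P (card_of X x)"
  show "locally_P P X"
  proof (rule loc_from_open_cover)
    fix x assume x: "x \<in> topspace X"
    obtain b where b: "b \<in> topspace X" "b \<noteq> x" using assms(2) by metis
    show "\<exists>W. openin X W \<and> x \<in> W \<and> locally_P P (subtopology X W)"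
    proof (intro exI conjI)
      show "openin X (topspace X - {b})" by (rule t1_space_openin_delete_alt[THEN iffD1, OF assms(1), rule_format, OF openin_topspace])
      show "x \<in> topspace X - {b}" using x b by blast
      show "locally_P P (subtopology X (topspace X - {b}))" using C b unfolding card_of_def by blast
    qed
  qed
qed

lemma loc_transport:
  assumes hom: "homeomorphic_map Y Y' f"
    and PQ: "\<forall>S T. S homeomorphic_space T \<longrightarrow> P S \<longrightarrow> Q T"
    and L: "locally_P P Y"
  shows "locally_P Q Y'"
  unfolding locally_P_def
proof (intro ballI allI impI)
  fix y' U' assume y': "y' \<in> topspace Y'" and U': "openin Y' U' \<and> y' \<in> U'"
  have fY: "f ` topspace Y = topspace Y'" by (rule homeomorphic_imp_surjective_map[OF hom])
  have "y' \<in> f ` topspace Y" using fY y' by simp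
  then obtain y where y: "y \<in> topspace Y" "f y = y'" by auto
  define U where "U = {x \<in> topspace Y. f x \<in> U'}"
  have cont: "continuous_map Y Y' f" by (rule homeomorphic_imp_continuous_map[OF hom])
  have "openin Y U" unfolding U_def by (rule openin_continuous_map_preimage[OF cont]) (use U' in blast)
  moreover have "y \<in> U" using y U' unfolding U_def by simp
  ultimately obtain A where A: "A \<subseteq> topspace Y" "y \<in> Y interior_of A" "A \<subseteq> U" "P (subtopology Y A)"
    using locally_PD[OF L y(1) \<open>openin Y U\<close> \<open>y \<in> U\<close>] by blast
  have "Y' interior_of (f ` A) = f ` (Y interior_of A)"
    by (rule homeomorphic_map_interior_of[OF hom A(1)])
  then have "y' \<in> Y' interior_of (f ` A)" using A y by auto
  moreover have "f ` A \<subseteq> topspace Y'" using A fY by blast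
  moreover have "f ` A \<subseteq> U'" using A unfolding U_def by blast
  moreover have "Q (subtopology Y' (f ` A))"
  proof -
    have "homeomorphic_map (subtopology Y A) (subtopology Y' (f ` A)) f"
      by (rule homeomorphic_map_subtopologies[OF hom]) (use A fY in auto)
    then have "subtopology Y A homeomorphic_space subtopology Y' (f ` A)"
      unfolding homeomorphic_space by blast
    then show ?thesis using PQ A(4) by blast
  qed
  ultimately show "\<exists>A. A \<subseteq> topspace Y' \<and> y' \<in> Y' interior_of A \<and> A \<subseteq> U' \<and> Q (subtopology Y' A)"
    by blast
qed

lemma loc_transport_space:
  assumes "Y homeomorphic_space Y'" "\<forall>S T. S homeomorphic_space T \<longrightarrow> P S \<longrightarrow> Q T"
    "locally_P P Y"
  shows "locally_P Q Y'"
proof -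
  obtain f where "homeomorphic_map Y Y' f" using assms(1) unfolding homeomorphic_space by blast
  then show ?thesis by (rule loc_transport[OF _ assms(2,3)])
qed

theorem theorem3p2:
  fixes P :: "'a topology \<Rightarrow> bool" and Q :: "'b topology \<Rightarrow> bool"
    and X :: "'a topology" and Z :: "'b topology"
  assumes "topological_property P" and "topological_property Q"
    and "\<forall>S T. S homeomorphic_space T \<longrightarrow> (P S \<longleftrightarrow> Q T)"
    and "t1_space X" and "\<exists>a b. a \<in> topspace X \<and> b \<in> topspace X \<and> a \<noteq> b"
  shows "(locally_P P X \<longleftrightarrow> (\<forall>x \<in> topspace X. locally_P P (card_of X x)))
    \<and> ((t1_space Z \<and> (\<exists>a b. a \<in> topspace Z \<and> b \<in> topspace Z \<and> a \<noteq> b) \<and> same_deck X Z)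
        \<longrightarrow> (locally_P P X \<longleftrightarrow> locally_P Q Z))"
proof (intro conjI impI)
  show 1: "locally_P P X \<longleftrightarrow> (\<forall>x \<in> topspace X. locally_P P (card_of X x))"
    by (rule loc_cards[OF assms(4,5)])
  assume H: "t1_space Z \<and> (\<exists>a b. a \<in> topspace Z \<and> b \<in> topspace Z \<and> a \<noteq> b) \<and> same_deck X Z"
  have HZ: "t1_space Z" "\<exists>a b. a \<in> topspace Z \<and> b \<in> topspace Z \<and> a \<noteq> b" "same_deck X Z"
    using H by auto
  have 2: "locally_P Q Z \<longleftrightarrow> (\<forall>z \<in> topspace Z. locally_P Q (card_of Z z))"
    by (rule loc_cards[OF HZ(1,2)])
  have PQ: "\<forall>S T. S homeomorphic_space T \<longrightarrow> P S \<longrightarrow> Q T" using assms(3) by blast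
  have QP: "\<forall>S T. S homeomorphic_space T \<longrightarrow> Q S \<longrightarrow> P T"
  proof (intro allI impI)
    fix S :: "'b topology" and T :: "'a topology" assume ST: "S homeomorphic_space T" and QS: "Q S"
    have "T homeomorphic_space S" by (rule homeomorphic_space_sym[THEN iffD1, OF ST])
    then show "P T" using assms(3)[rule_format, of T S] QS by simp
  qed
  show "locally_P P X \<longleftrightarrow> locally_P Q Z"
    unfolding 1 2
  proof
    assume A: "\<forall>x \<in> topspace X. locally_P P (card_of X x)"
    show "\<forall>z \<in> topspace Z. locally_P Q (card_of Z z)"
    proof
      fix z assume z: "z \<in> topspace Z"
      have "\<exists>x \<in> topspace X. card_of X x homeomorphic_space card_of Z z"
        using HZ(3) z unfolding same_deck_def by simp
      then obtain x where x: "x \<in> topspace X" "card_of X x homeomorphic_space card_of Z z"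
        by (elim bexE) simp
      have "locally_P P (card_of X x)" using A x(1) by simp
      then show "locally_P Q (card_of Z z)" by (rule loc_transport_space[OF x(2) PQ])
    qed
  next
    assume A: "\<forall>z \<in> topspace Z. locally_P Q (card_of Z z)"
    show "\<forall>x \<in> topspace X. locally_P P (card_of X x)"
    proof
      fix x assume x: "x \<in> topspace X"
      have "\<exists>z \<in> topspace Z. card_of X x homeomorphic_space card_of Z z"
        using HZ(3) x unfolding same_deck_def by simp
      then obtain z where z: "z \<in> topspace Z" "card_of X x homeomorphic_space card_of Z z"
        by (elim bexE) simp
      have "card_of Z z homeomorphic_space card_of X x" by (rule homeomorphic_space_sym[THEN iffD1, OF z(2)])
      moreover have "locally_P Q (card_of Z z)" using A z(1) by simp
      ultimately show "locally_P P (card_of X x)" by (rule loc_transport_space[OF _ QP])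
    qed
  qed
qed

end
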